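(* Let $n\geqslant 2$ and let $\alpha$ be a partial cofinite isometry of $\mathbb{N}^n$. Then for every $i\in\{1,\ldots,n\}$ there exist a unique $j(i)\in\{1,\ldots,n\}$ and an integer $q(i)$ such that $(\mathbf{m}_i)\alpha=(\mathbf{m+q(i)})_{j(i)}$ for every integer $m\geqslant 2$ with $\mathbf{m}_i\in\operatorname{dom}\alpha$. Moreover, the map $i\mapsto j(i)$ is a permutation of the set $\{1,\ldots,n\}$.
   Context: $\mathbb{N}=\{1,2,3,\ldots\}$ and $\mathbb{N}^n$ carries the Euclidean metric $d$. A partial isometry of $\mathbb{N}^n$ is an injective partial map $\alpha\colon\mathbb{N}^n\rightharpoonup\mathbb{N}^n$ with $d((\mathbf{x})\alpha,(\mathbf{y})\alpha)=d(\mathbf{x},\mathbf{y})$ for all $\mathbf{x},\mathbf{y}\in\operatorname{dom}\alpha$; it is cofinite if $\mathbb{N}^n\setminus\operatorname{dom}\alpha$ and $\mathbb{N}^n\setminus\operatorname{ran}\alpha$ are finite. Maps are written on the right. For a positive integer $k$ and $j\in\{1,\ldots,n\}$, $\mathbf{k}_j\in\mathbb{N}^n$ denotes the point whose $j$-th coordinate is $k$ and all other coordinates equal $1$. *)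

theory Defs
  imports Complex_Main "HOL-Combinatorics.Permutations"
begin

text \<open>Points of N^n are represented as functions nat => int, with coordinates indexed
by 1..n, each coordinate at least 1, and value 0 outside 1..n (canonical representative).\<close>

definition Nn :: "nat \<Rightarrow> (nat \<Rightarrow> int) set" where
  "Nn n = {x. (\<forall>l\<in>{1..n}. x l \<ge> 1) \<and> (\<forall>l. l \<notin> {1..n} \<longrightarrow> x l = 0)}"

definition edist :: "nat \<Rightarrow> (nat \<Rightarrow> int) \<Rightarrow> (nat \<Rightarrow> int) \<Rightarrow> real" where
  "edist n x y = sqrt (\<Sum>l\<in>{1..n}. (real_of_int (x l - y l))^2)"

definition partial_isometry :: "nat \<Rightarrow> ((nat \<Rightarrow> int) \<rightharpoonup> (nat \<Rightarrow> int)) \<Rightarrow> bool" where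
  "partial_isometry n \<alpha> \<longleftrightarrow>
     dom \<alpha> \<subseteq> Nn n \<and> ran \<alpha> \<subseteq> Nn n \<and> inj_on \<alpha> (dom \<alpha>) \<and>
     (\<forall>x\<in>dom \<alpha>. \<forall>y\<in>dom \<alpha>. edist n (the (\<alpha> x)) (the (\<alpha> y)) = edist n x y)"

definition cofinite_pmap :: "nat \<Rightarrow> ((nat \<Rightarrow> int) \<rightharpoonup> (nat \<Rightarrow> int)) \<Rightarrow> bool" where
  "cofinite_pmap n \<alpha> \<longleftrightarrow> finite (Nn n - dom \<alpha>) \<and> finite (Nn n - ran \<alpha>)"

definition kpt :: "nat \<Rightarrow> int \<Rightarrow> nat \<Rightarrow> (nat \<Rightarrow> int)" where
  "kpt n k j = (\<lambda>l. if l \<in> {1..n} then (if l = j then k else 1) else 0)"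

end

theory Submission imports Defs begin



definition sd :: "nat \<Rightarrow> (nat \<Rightarrow> int) \<Rightarrow> (nat \<Rightarrow> int) \<Rightarrow> int" where
  "sd n x y = (\<Sum>l\<in>{1..n}. (x l - y l)^2)"

lemma edist_sd: "edist n x y = sqrt (of_int (sd n x y))"
  unfolding edist_def sd_def by simp

lemma sd_comm: "sd n x y = sd n y x"
  unfolding sd_def by (rule sum.cong) (auto simp: power2_commute)

lemma sd_single:
  assumes "l \<in> {1..n}" "\<forall>k\<in>{1..n}. x k - y k = (if k = l then a else 0)"
  shows "sd n x y = a^2"
proof -
  have "sd n x y = (\<Sum>k\<in>{1..n}. if k = l then a^2 else 0)"
    unfolding sd_def by (rule sum.cong) (use assms in auto)
  also have "\<dots> = a^2" using assms(1) by simp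
  finally show ?thesis .
qed

lemma sd_double:
  assumes "l1 \<in> {1..n}" "l2 \<in> {1..n}" "l1 \<noteq> l2"
    "\<forall>k\<in>{1..n}. x k - y k = (if k = l1 then a else 0) + (if k = l2 then b else 0)"
  shows "sd n x y = a^2 + b^2"
proof -
  have "sd n x y = (\<Sum>k\<in>{1..n}. (if k = l1 then a^2 else 0) + (if k = l2 then b^2 else 0))"
    unfolding sd_def by (rule sum.cong) (use assms in auto)
  also have "\<dots> = a^2 + b^2" using assms(1,2) by (simp add: sum.distrib)
  finally show ?thesis .
qed

lemma sd_unit:
  assumes "sd n x y = 1"
  shows "\<exists>l\<in>{1..n}. \<exists>s. (s = 1 \<or> s = -1) \<and> (\<forall>k\<in>{1..n}. x k - y k = (if k = l then s else 0))"
proof -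
  have "\<exists>l\<in>{1..n}. x l - y l \<noteq> 0"
  proof (rule ccontr)
    assume "\<not> ?thesis"
    then have "sd n x y = 0" unfolding sd_def by simp
    with assms show False by simp
  qed
  then obtain l where l: "l \<in> {1..n}" "x l - y l \<noteq> 0" by blast
  have split: "sd n x y = (x l - y l)^2 + (\<Sum>k\<in>{1..n}-{l}. (x k - y k)^2)"
    unfolding sd_def using l(1) by (simp add: sum.remove)
  have r0: "(\<Sum>k\<in>{1..n}-{l}. (x k - y k)^2) \<ge> 0" by (rule sum_nonneg) simp
  have ab: "\<bar>x l - y l\<bar> \<ge> 1" using l(2) by linarith
  have "1 \<le> \<bar>x l - y l\<bar>^2" using ab by (rule one_le_power)
  then have "(x l - y l)^2 \<ge> 1" by simp
  with split r0 assms have sq: "(x l - y l)^2 = 1" and r: "(\<Sum>k\<in>{1..n}-{l}. (x k - y k)^2) = 0"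
    by linarith+
  have "\<forall>k\<in>{1..n}-{l}. (x k - y k)^2 = 0"
    using r by (subst (asm) sum_nonneg_eq_0_iff) auto
  then have "\<forall>k\<in>{1..n}. x k - y k = (if k = l then x l - y l else 0)" by auto
  with sq l(1) show ?thesis unfolding power2_eq_1_iff by blast
qed

lemma collinear:
  fixes s t :: int
  assumes "sd n x y = s^2" "sd n y z = t^2" "sd n x z = (s+t)^2"
  shows "\<forall>k\<in>{1..n}. t*(y k - x k) = s*(z k - y k)"
proof -
  define u where "u k = y k - x k" for k
  define w where "w k = z k - y k" for k
  let ?S = "{1..n}"
  have A: "(\<Sum>k\<in>?S. (u k)^2) = s^2" using assms(1) sd_comm[of n x y]
    unfolding sd_def u_def by simp
  have B: "(\<Sum>k\<in>?S. (w k)^2) = t^2" using assms(2) sd_comm[of n y z]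
    unfolding sd_def w_def by simp
  have "sd n x z = (\<Sum>k\<in>?S. (u k)^2 + 2 * (u k * w k) + (w k)^2)"
    unfolding sd_def u_def w_def by (rule sum.cong) (auto simp: power2_eq_square algebra_simps)
  also have "\<dots> = (\<Sum>k\<in>?S. (u k)^2) + 2 * (\<Sum>k\<in>?S. u k * w k) + (\<Sum>k\<in>?S. (w k)^2)"
    by (simp add: sum.distrib sum_distrib_left)
  finally have C: "(\<Sum>k\<in>?S. u k * w k) = s * t" using A B assms(3)
    by (simp add: power2_eq_square algebra_simps)
  have "(\<Sum>k\<in>?S. (t * u k - s * w k)^2) = (\<Sum>k\<in>?S. t^2 * (u k)^2 - 2*t*s*(u k * w k) + s^2 * (w k)^2)"
    by (rule sum.cong) (auto simp: power2_eq_square algebra_simps)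
  also have "\<dots> = t^2 * (\<Sum>k\<in>?S. (u k)^2) - 2*t*s*(\<Sum>k\<in>?S. u k * w k) + s^2 * (\<Sum>k\<in>?S. (w k)^2)"
    by (simp add: sum.distrib sum_subtractf sum_distrib_left)
  also have "\<dots> = 0" unfolding A B C by (simp add: power2_eq_square algebra_simps)
  finally have "\<forall>k\<in>?S. (t * u k - s * w k)^2 = 0"
    by (subst (asm) sum_nonneg_eq_0_iff) auto
  then show ?thesis unfolding u_def w_def by simp
qed

lemma ev_notin:
  fixes g :: "int \<Rightarrow> 'a"
  assumes "finite F" "inj g"
  shows "\<forall>\<^sub>F c in at_top. g c \<notin> F"
proof -
  have "finite (g -` F)" using assms by (rule finite_vimageI)
  define B where "B = Max (insert 0 (g -` F))"
  have B: "\<forall>x\<in>g -` F. x \<le> B"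
    using \<open>finite (g -` F)\<close> unfolding B_def by auto
  show ?thesis using eventually_ge_at_top[of "B+1"]
    by eventually_elim (use B in force)
qed

lemma ev_ex: "eventually P (at_top :: int filter) \<Longrightarrow> \<exists>x. P x"
  by (auto simp: eventually_at_top_linorder)

lemma kpt_at: "i \<in> {1..n} \<Longrightarrow> kpt n m i i = m"
  by (simp add: kpt_def)
lemma kpt_out: "k \<notin> {1..n} \<Longrightarrow> kpt n m i k = 0"
  unfolding kpt_def by auto
lemma kpt_Nn: "m \<ge> 1 \<Longrightarrow> kpt n m i \<in> Nn n"
  by (auto simp: kpt_def Nn_def)
lemma kpt_diff: "\<forall>k\<in>{1..n}. kpt n a i k - kpt n b i k = (if k = i then a - b else 0)"
  by (simp add: kpt_def)
lemma sd_kpt: "i \<in> {1..n} \<Longrightarrow> sd n (kpt n a i) (kpt n b i) = (a - b)^2"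
  by (rule sd_single[OF _ kpt_diff])
lemma Nn_out: "x \<in> Nn n \<Longrightarrow> k \<notin> {1..n} \<Longrightarrow> x k = 0"
  by (simp add: Nn_def)
lemma Nn_in: "x \<in> Nn n \<Longrightarrow> k \<in> {1..n} \<Longrightarrow> x k \<ge> 1"
  by (simp add: Nn_def)

lemma neighbor:
  assumes i: "i\<in>{1..n}" and z: "z \<in> Nn n" and s1: "sd n z (kpt n M i) = 1"
    and s2: "sd n z (kpt n (M-1) i) = 2"
  shows "z \<in> (\<lambda>k t. kpt n M i t + (if t = k then 1 else 0)) ` ({1..n} - {i})"
proof -
  obtain l s where l: "l \<in> {1..n}" and s: "s = 1 \<or> s = -1"
    and d: "\<forall>k\<in>{1..n}. z k - kpt n M i k = (if k = l then s else 0)"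
    using sd_unit[OF s1] by blast
  have li: "l \<noteq> i"
  proof
    assume "l = i"
    then have "\<forall>k\<in>{1..n}. z k - kpt n (M-1) i k = (if k = i then s + 1 else 0)"
      using d by (auto simp: kpt_def)
    then have "sd n z (kpt n (M-1) i) = (s+1)^2" by (rule sd_single[OF i])
    with s2 s show False by auto
  qed
  have "z l \<ge> 1" using Nn_in[OF z l] .
  moreover have "kpt n M i l = 1" using l li by (simp add: kpt_def)
  ultimately have "s = 1" using d l s by force
  have "z = (\<lambda>t. kpt n M i t + (if t = l then 1 else 0))"
  proof
    fix t show "z t = kpt n M i t + (if t = l then 1 else 0)"
    proof (cases "t \<in> {1..n}")
      case True then show ?thesis using d \<open>s = 1\<close> by force
    next
      case False then show ?thesis using Nn_out[OF z False] kpt_out[OF False] l by auto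
    qed
  qed
  then show ?thesis using l li by blast
qed





locale piso =
  fixes n :: nat and \<alpha> :: "(nat \<Rightarrow> int) \<rightharpoonup> (nat \<Rightarrow> int)"
  assumes pi: "partial_isometry n \<alpha>" and cof: "cofinite_pmap n \<alpha>"


context piso begin

lemma domNn: "x \<in> dom \<alpha> \<Longrightarrow> x \<in> Nn n" using pi unfolding partial_isometry_def by auto
lemma ranNn: "y \<in> ran \<alpha> \<Longrightarrow> y \<in> Nn n" using pi unfolding partial_isometry_def by auto
lemma injA: "inj_on \<alpha> (dom \<alpha>)" using pi unfolding partial_isometry_def by auto
lemma iso: "x \<in> dom \<alpha> \<Longrightarrow> y \<in> dom \<alpha> \<Longrightarrow> sd n (the (\<alpha> x)) (the (\<alpha> y)) = sd n x y"
  using pi unfolding partial_isometry_def edist_sd by auto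
lemma theNn: "x \<in> dom \<alpha> \<Longrightarrow> the (\<alpha> x) \<in> Nn n"
  by (rule ranNn) (auto simp: ran_def)
lemma theS: "x \<in> dom \<alpha> \<Longrightarrow> \<alpha> x = Some (the (\<alpha> x))" by auto

lemma ev_kdom: "i \<in> {1..n} \<Longrightarrow> \<forall>\<^sub>F c in at_top. kpt n (c + r) i \<in> dom \<alpha> \<and> c + r \<ge> 2"
proof -
  assume i: "i \<in> {1..n}"
  have inj: "inj (\<lambda>c. kpt n (c + r) i)"
    by (rule injI) (metis add_right_cancel kpt_at[OF i])
  have fin: "finite (Nn n - dom \<alpha>)" using cof unfolding cofinite_pmap_def by auto
  have "\<forall>\<^sub>F c in at_top. kpt n (c + r) i \<notin> Nn n - dom \<alpha>"
    using ev_notin[OF fin inj] by simp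
  then show ?thesis using eventually_ge_at_top[of "2 - r"]
  proof eventually_elim
    case (elim c)
    then have "kpt n (c + r) i \<in> Nn n" by (intro kpt_Nn) simp
    with elim show ?case by auto
  qed
qed


lemma ev_ran:
  fixes g :: "int \<Rightarrow> nat \<Rightarrow> int"
  assumes "inj g" "\<forall>\<^sub>F c in at_top. g c \<in> Nn n"
  shows "\<forall>\<^sub>F c in at_top. (g c :: nat \<Rightarrow> int) \<in> ran \<alpha>"
proof -
  have fin: "finite (Nn n - ran \<alpha>)" using cof unfolding cofinite_pmap_def by auto
  have "\<forall>\<^sub>F c in at_top. g c \<notin> Nn n - ran \<alpha>"
    using ev_notin[OF fin assms(1)] .
  then show ?thesis using assms(2) by eventually_elim auto
qed

end


context piso begin

lemma ray:
  assumes i: "i \<in> {1..n}"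
  shows "\<exists>j\<in>{1..n}. \<exists>q::int. \<forall>m::int. m \<ge> 2 \<longrightarrow> kpt n m i \<in> dom \<alpha> \<longrightarrow>
                \<alpha> (kpt n m i) = Some (kpt n (m + q) j)"
proof -
  define f where "f m = the (\<alpha> (kpt n m i))" for m
  have fsd: "sd n (f a) (f b) = (a - b)^2" if "kpt n a i \<in> dom \<alpha>" "kpt n b i \<in> dom \<alpha>" for a b
    unfolding f_def using iso[OF that] sd_kpt[OF i] by simp
  have fNn: "f a \<in> Nn n" if "kpt n a i \<in> dom \<alpha>" for a
    unfolding f_def using theNn[OF that] .
  have fS: "\<alpha> (kpt n a i) = Some (f a)" if "kpt n a i \<in> dom \<alpha>" for a
    unfolding f_def using that by auto
  have ev0: "\<forall>\<^sub>F c in at_top. kpt n c i \<in> dom \<alpha> \<and> c \<ge> 2"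
    using ev_kdom[OF i, of 0] by simp
  obtain m0 where m0: "kpt n m0 i \<in> dom \<alpha>" "kpt n (m0+1) i \<in> dom \<alpha>"
    using ev_ex[OF eventually_conj[OF ev_kdom[OF i, of 0] ev_kdom[OF i, of 1]]] by auto
  define v where "v k = f (m0+1) k - f m0 k" for k
  have "sd n (f (m0+1)) (f m0) = 1" using fsd[OF m0(2) m0(1)] by simp
  from sd_unit[OF this] obtain l s where l: "l \<in> {1..n}" and s: "s = 1 \<or> s = -1"
    and vin: "\<forall>k\<in>{1..n}. v k = (if k = l then s else 0)" unfolding v_def by blast
  have vk: "v k = (if k = l then s else 0)" for k
  proof (cases "k \<in> {1..n}")
    case True then show ?thesis using vin by auto
  next
    case False then show ?thesis using l Nn_out[OF fNn[OF m0(1)] False] Nn_out[OF fNn[OF m0(2)] False]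
      unfolding v_def by auto
  qed
  have line: "f c k = f m0 k + (c - m0) * v k" if c: "kpt n c i \<in> dom \<alpha>" for c k
  proof (cases "k \<in> {1..n}")
    case False then show ?thesis using l Nn_out[OF fNn[OF m0(1)] False] Nn_out[OF fNn[OF c] False] vk
      by auto
  next
    case k: True
    consider "c = m0" | "c = m0 + 1" | "c > m0 + 1" | "c < m0" by linarith
    then show ?thesis
    proof cases
      case 1 then show ?thesis by simp
    next
      case 2 then show ?thesis unfolding v_def by simp
    next
      case 3
      have a1: "sd n (f m0) (f (m0+1)) = 1^2" using fsd[OF m0(1) m0(2)] by simp
      have a2: "sd n (f (m0+1)) (f c) = (c - m0 - 1)^2" using fsd[OF m0(2) c]
        by (simp add: power2_commute algebra_simps)
      have a3: "sd n (f m0) (f c) = (1 + (c - m0 - 1))^2" using fsd[OF m0(1) c]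
        by (simp add: power2_commute algebra_simps)
      have "\<forall>k\<in>{1..n}. (c - m0 - 1) * (f (m0+1) k - f m0 k) = 1 * (f c k - f (m0+1) k)"
        by (rule collinear[OF a1 a2 a3])
      with k show ?thesis unfolding v_def by (auto simp: algebra_simps)
    next
      case 4
      have a1: "sd n (f c) (f m0) = (m0 - c)^2" using fsd[OF c m0(1)]
        by (simp add: power2_commute algebra_simps)
      have a2: "sd n (f m0) (f (m0+1)) = 1^2" using fsd[OF m0(1) m0(2)] by simp
      have a3: "sd n (f c) (f (m0+1)) = ((m0 - c) + 1)^2" using fsd[OF c m0(2)]
        by (simp add: power2_commute algebra_simps)
      have "\<forall>k\<in>{1..n}. 1 * (f m0 k - f c k) = (m0 - c) * (f (m0+1) k - f m0 k)"
        by (rule collinear[OF a1 a2 a3])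
      with k show ?thesis unfolding v_def by (auto simp: algebra_simps)
    qed
  qed
  have s1: "s = 1"
  proof (rule ccontr)
    assume "s \<noteq> 1" with s have sm: "s = -1" by simp
    obtain c where c: "kpt n c i \<in> dom \<alpha>" "c \<ge> f m0 l + m0 + 1"
      using ev_ex[OF eventually_conj[OF ev0 eventually_ge_at_top[of "f m0 l + m0 + 1"]]] by auto
    have "f c l = f m0 l - (c - m0)" using line[OF c(1), of l] vk sm by simp
    moreover have "f c l \<ge> 1" using Nn_in[OF fNn[OF c(1)] l] .
    ultimately show False using c(2) by linarith
  qed
  define P where "P k = f m0 k - m0 * v k" for k
  have fP: "f c k = P k + c * v k" if "kpt n c i \<in> dom \<alpha>" for c k
    using line[OF that, of k] unfolding P_def by (simp add: algebra_simps)
  have P1: "P k = 1" if k: "k \<in> {1..n}" "k \<noteq> l" for k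
  proof (rule ccontr)
    assume Pne: "P k \<noteq> 1"
    have "f m0 k \<ge> 1" using Nn_in[OF fNn[OF m0(1)] k(1)] .
    then have P2: "P k \<ge> 2" using Pne vk k unfolding P_def by auto
    define Y where "Y M = (\<lambda>t. P t + M * v t)" for M
    define gp where "gp M l' = (\<lambda>t. Y M t + (if t = l' then 1 else 0))" for M l'
    define gm where "gm M = (\<lambda>t. Y M t - (if t = k then 1 else 0))" for M
    have YNn: "Y M \<in> Nn n" if "kpt n M i \<in> dom \<alpha>" for M
    proof -
      have "Y M = f M" unfolding Y_def using fP[OF that] by auto
      then show ?thesis using fNn[OF that] by simp
    qed
    have injgp: "inj (\<lambda>M. gp M l')" for l'
      by (rule injI) (drule fun_cong[where x=l], auto simp: gp_def Y_def vk s1)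
    have injgm: "inj gm"
      by (rule injI) (drule fun_cong[where x=l], use k in \<open>auto simp: gm_def Y_def vk s1\<close>)
    have evgp: "\<forall>\<^sub>F M in at_top. gp M l' \<in> ran \<alpha>" if "l' \<in> {1..n}" for l'
    proof (rule ev_ran[OF injgp])
      show "\<forall>\<^sub>F M in at_top. gp M l' \<in> Nn n" using ev0
      proof eventually_elim
        case (elim M)
        have YN: "Y M \<in> Nn n" using YNn elim by auto
        show ?case unfolding Nn_def
        proof (intro CollectI conjI ballI allI impI)
          fix t assume t: "t \<in> {1..n}"
          show "1 \<le> gp M l' t" using Nn_in[OF YN t] unfolding gp_def by (cases "t = l'") auto
        next
          fix t assume t: "t \<notin> {1..n}"
          show "gp M l' t = 0" using Nn_out[OF YN t] t that unfolding gp_def by auto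
        qed
      qed
    qed
    have evgm: "\<forall>\<^sub>F M in at_top. gm M \<in> ran \<alpha>"
    proof (rule ev_ran[OF injgm])
      show "\<forall>\<^sub>F M in at_top. gm M \<in> Nn n" using ev0
      proof eventually_elim
        case (elim M)
        have YN: "Y M \<in> Nn n" using YNn elim by auto
        have "Y M k = P k" using k by (simp add: Y_def vk)
        then show ?case using YN P2 k unfolding gm_def Nn_def by auto
      qed
    qed
    have "\<forall>\<^sub>F M in at_top. (\<forall>l'\<in>{1..n}. gp M l' \<in> ran \<alpha>) \<and> gm M \<in> ran \<alpha> \<and>
        (kpt n M i \<in> dom \<alpha> \<and> M \<ge> 2) \<and> (kpt n (M + -1) i \<in> dom \<alpha> \<and> M + -1 \<ge> 2)"
      by (intro eventually_conj eventually_ball_finite ballI evgp ev0 evgm ev_kdom[OF i]) auto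
    then obtain M where M: "\<forall>l'\<in>{1..n}. gp M l' \<in> ran \<alpha>" "gm M \<in> ran \<alpha>"
      "kpt n M i \<in> dom \<alpha>" "kpt n (M - 1) i \<in> dom \<alpha>"
      using ev_ex by fastforce
    define h where "h l' = (if l' = l then gm M else gp M l')" for l'
    have hran: "h l' \<in> ran \<alpha>" if "l' \<in> {1..n}" for l' using M that unfolding h_def by auto
    define z where "z l' = (SOME z. \<alpha> z = Some (h l'))" for l'
    have zS: "\<alpha> (z l') = Some (h l')" if "l' \<in> {1..n}" for l'
    proof -
      have "\<exists>z. \<alpha> z = Some (h l')" using hran[OF that] unfolding ran_def by auto
      then show ?thesis unfolding z_def by (rule someI_ex)
    qed
    have zdom: "z l' \<in> dom \<alpha>" if "l' \<in> {1..n}" for l' using zS[OF that] by auto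
    have fM: "f M = Y M" using fP[OF M(3)] unfolding Y_def by auto
    have fM1: "f (M-1) = Y (M-1)" using fP[OF M(4)] unfolding Y_def by auto
    have sd1: "sd n (h l') (Y M) = 1" if l': "l' \<in> {1..n}" for l'
    proof (cases "l' = l")
      case True
      have "\<forall>t\<in>{1..n}. h l' t - Y M t = (if t = k then -1 else 0)"
        using True unfolding h_def gm_def by auto
      from sd_single[OF k(1) this] show ?thesis by simp
    next
      case False
      have "\<forall>t\<in>{1..n}. h l' t - Y M t = (if t = l' then 1 else 0)"
        using False unfolding h_def gp_def by auto
      from sd_single[OF l' this] show ?thesis by simp
    qed
    have sd2: "sd n (h l') (Y (M-1)) = 2" if l': "l' \<in> {1..n}" for l'
    proof (cases "l' = l")
      case True
      have "\<forall>t\<in>{1..n}. h l' t - Y (M-1) t = (if t = k then -1 else 0) + (if t = l then 1 else 0)"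
        using True k(2) unfolding h_def gm_def Y_def by (auto simp: vk s1 algebra_simps)
      from sd_double[OF k(1) l k(2) this] show ?thesis by simp
    next
      case False
      have "\<forall>t\<in>{1..n}. h l' t - Y (M-1) t = (if t = l' then 1 else 0) + (if t = l then 1 else 0)"
        using False unfolding h_def gp_def Y_def by (auto simp: vk s1 algebra_simps)
      from sd_double[OF l' l False this] show ?thesis by simp
    qed
    have zT: "z l' \<in> (\<lambda>k t. kpt n M i t + (if t = k then 1 else 0)) ` ({1..n} - {i})"
      if l': "l' \<in> {1..n}" for l'
    proof (rule neighbor[OF i domNn[OF zdom[OF l']]])
      show "sd n (z l') (kpt n M i) = 1"
        using iso[OF zdom[OF l'] M(3)] zS[OF l'] sd1[OF l'] fM unfolding f_def by simp
      show "sd n (z l') (kpt n (M-1) i) = 2"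
        using iso[OF zdom[OF l'] M(4)] zS[OF l'] sd2[OF l'] fM1 unfolding f_def by simp
    qed
    have hinj: "h a \<noteq> h b" if ab: "a \<in> {1..n}" "b \<in> {1..n}" "a \<noteq> b" for a b
    proof
      assume e: "h a = h b"
      consider "a \<noteq> l" "b \<noteq> l" | "a = l" | "b = l" by blast
      then show False
      proof cases
        case 1 then show False using fun_cong[OF e, of a] ab unfolding h_def gp_def by auto
      next
        case 2 then show False using fun_cong[OF e, of b] ab unfolding h_def gp_def gm_def by (auto split: if_splits)
      next
        case 3 then show False using fun_cong[OF e, of a] ab unfolding h_def gp_def gm_def by (auto split: if_splits)
      qed
    qed
    have "inj_on z {1..n}"
    proof (rule inj_onI)
      fix a b assume ab: "a \<in> {1..n}" "b \<in> {1..n}" "z a = z b"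
      then have "h a = h b" using zS[OF ab(1)] zS[OF ab(2)] by simp
      then show "a = b" using hinj ab(1,2) by blast
    qed
    then have "card {1..n} \<le> card ((\<lambda>k t. kpt n M i t + (if t = k then 1 else 0)) ` ({1..n} - {i}))"
      by (rule card_inj_on_le) (use zT in auto)
    also have "\<dots> \<le> card ({1..n} - {i})" by (rule card_image_le) simp
    also have "\<dots> < card {1..n}" using i by (intro card_Diff1_less) auto
    finally show False by simp
  qed
  show ?thesis
  proof (rule bexI[where x=l], rule exI[where x="P l"], intro allI impI)
    fix m :: int assume m: "m \<ge> 2" "kpt n m i \<in> dom \<alpha>"
    have "f m = kpt n (m + P l) l"
    proof
      fix t show "f m t = kpt n (m + P l) l t"
      proof (cases "t \<in> {1..n}")
        case True then show ?thesis using fP[OF m(2), of t] P1[of t] vk s1 unfolding kpt_def by auto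
      next
        case False then show ?thesis using Nn_out[OF fNn[OF m(2)] False] kpt_out[OF False] by simp
      qed
    qed
    then show "\<alpha> (kpt n m i) = Some (kpt n (m + P l) l)" using fS[OF m(2)] by simp
  qed (rule l)
qed

end


context piso begin

lemma ray_unique:
  assumes i: "i \<in> {1..n}" "j \<in> {1..n}" "j' \<in> {1..n}"
   and R: "\<forall>m::int. m \<ge> 2 \<longrightarrow> kpt n m i \<in> dom \<alpha> \<longrightarrow> \<alpha> (kpt n m i) = Some (kpt n (m+q) j)"
   and R': "\<forall>m::int. m \<ge> 2 \<longrightarrow> kpt n m i \<in> dom \<alpha> \<longrightarrow> \<alpha> (kpt n m i) = Some (kpt n (m+q') j')"
  shows "j = j'"
proof (rule ccontr)
  assume ne: "j \<noteq> j'"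
  obtain m where m: "kpt n m i \<in> dom \<alpha>" "m \<ge> 2" "m \<ge> 2 - q"
    using ev_ex[OF eventually_conj[OF ev_kdom[OF i(1), of 0] eventually_ge_at_top[of "2 - q"]]] by auto
  have e1: "\<alpha> (kpt n m i) = Some (kpt n (m+q) j)" using R m by blast
  have e2: "\<alpha> (kpt n m i) = Some (kpt n (m+q') j')" using R' m by blast
  have "kpt n (m+q) j j = kpt n (m+q') j' j" using e1 e2 by simp
  moreover have "kpt n (m+q) j j = m + q" using kpt_at[OF i(2)] .
  moreover have "kpt n (m+q') j' j = 1" using i(2) ne by (simp add: kpt_def)
  ultimately show False using m by linarith
qed

lemma ray_inj:
  assumes i: "i \<in> {1..n}" "i' \<in> {1..n}" "i \<noteq> i'"
   and R: "\<forall>m::int. m \<ge> 2 \<longrightarrow> kpt n m i \<in> dom \<alpha> \<longrightarrow> \<alpha> (kpt n m i) = Some (kpt n (m+q) j)"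
   and R': "\<forall>m::int. m \<ge> 2 \<longrightarrow> kpt n m i' \<in> dom \<alpha> \<longrightarrow> \<alpha> (kpt n m i') = Some (kpt n (m+q') j)"
  shows False
proof -
  obtain c where c: "kpt n (c+0) i \<in> dom \<alpha> \<and> c+0 \<ge> 2"
     "kpt n (c + (q - q')) i' \<in> dom \<alpha> \<and> c + (q-q') \<ge> 2"
    using ev_ex[OF eventually_conj[OF ev_kdom[OF i(1), of 0] ev_kdom[OF i(2), of "q - q'"]]] by blast
  have a1: "\<alpha> (kpt n c i) = Some (kpt n (c+q) j)" using R c by simp
  have "\<alpha> (kpt n (c + (q-q')) i') = Some (kpt n ((c + (q-q')) + q') j)"
    using R' c by blast
  then have a2: "\<alpha> (kpt n (c + (q-q')) i') = Some (kpt n (c+q) j)" by simp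
  have d1: "kpt n c i \<in> dom \<alpha>" using c by simp
  have d2: "kpt n (c+(q-q')) i' \<in> dom \<alpha>" using c by simp
  have "kpt n c i = kpt n (c+(q-q')) i'"
    using inj_onD[OF injA _ d1 d2] a1 a2 by simp
  then have "kpt n c i i = kpt n (c+(q-q')) i' i" by simp
  moreover have "kpt n c i i = c" using kpt_at[OF i(1)] .
  moreover have "kpt n (c+(q-q')) i' i = 1" using i by (simp add: kpt_def)
  ultimately show False using c by simp
qed

end

theorem lemma2p6:
  fixes n :: nat and \<alpha> :: "(nat \<Rightarrow> int) \<rightharpoonup> (nat \<Rightarrow> int)"
  assumes "n \<ge> 2"
    and "partial_isometry n \<alpha>"
    and "cofinite_pmap n \<alpha>"
  shows "(\<forall>i\<in>{1..n}. \<exists>!j. j \<in> {1..n} \<and>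
            (\<exists>q::int. \<forall>m::int. m \<ge> 2 \<longrightarrow> kpt n m i \<in> dom \<alpha> \<longrightarrow>
                \<alpha> (kpt n m i) = Some (kpt n (m + q) j)))
       \<and> (\<exists>\<sigma>. \<sigma> permutes {1..n} \<and>
            (\<forall>i\<in>{1..n}. \<exists>q::int. \<forall>m::int. m \<ge> 2 \<longrightarrow> kpt n m i \<in> dom \<alpha> \<longrightarrow>
                \<alpha> (kpt n m i) = Some (kpt n (m + q) (\<sigma> i))))"
proof -
  interpret piso n \<alpha> using assms(2,3) by unfold_locales
  have A: "\<forall>i\<in>{1..n}. \<exists>!j. j \<in> {1..n} \<and>
            (\<exists>q::int. \<forall>m::int. m \<ge> 2 \<longrightarrow> kpt n m i \<in> dom \<alpha> \<longrightarrow>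
                \<alpha> (kpt n m i) = Some (kpt n (m + q) j))"
  proof
    fix i assume i: "i \<in> {1..n}"
    from ray[OF i] obtain j q where j: "j \<in> {1..n}"
      and R: "\<forall>m::int. m \<ge> 2 \<longrightarrow> kpt n m i \<in> dom \<alpha> \<longrightarrow> \<alpha> (kpt n m i) = Some (kpt n (m+q) j)"
      by blast
    show "\<exists>!j. j \<in> {1..n} \<and>
            (\<exists>q::int. \<forall>m::int. m \<ge> 2 \<longrightarrow> kpt n m i \<in> dom \<alpha> \<longrightarrow>
                \<alpha> (kpt n m i) = Some (kpt n (m + q) j))"
    proof (rule ex1I[where a=j])
      show "j \<in> {1..n} \<and> (\<exists>q::int. \<forall>m::int. m \<ge> 2 \<longrightarrow> kpt n m i \<in> dom \<alpha> \<longrightarrow>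
                \<alpha> (kpt n m i) = Some (kpt n (m + q) j))" using j R by blast
    next
      fix j' assume "j' \<in> {1..n} \<and> (\<exists>q::int. \<forall>m::int. m \<ge> 2 \<longrightarrow> kpt n m i \<in> dom \<alpha> \<longrightarrow>
                \<alpha> (kpt n m i) = Some (kpt n (m + q) j'))"
      then obtain q' where j': "j' \<in> {1..n}"
        and R': "\<forall>m::int. m \<ge> 2 \<longrightarrow> kpt n m i \<in> dom \<alpha> \<longrightarrow> \<alpha> (kpt n m i) = Some (kpt n (m+q') j')"
        by blast
      show "j' = j" using ray_unique[OF i j' j R' R] .
    qed
  qed
  define \<sigma> where "\<sigma> i = (if i \<in> {1..n} then (SOME j. j \<in> {1..n} \<and> (\<exists>q::int. \<forall>m::int. m \<ge> 2 \<longrightarrow>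
      kpt n m i \<in> dom \<alpha> \<longrightarrow> \<alpha> (kpt n m i) = Some (kpt n (m + q) j))) else i)" for i
  have sig: "\<sigma> i \<in> {1..n} \<and> (\<exists>q::int. \<forall>m::int. m \<ge> 2 \<longrightarrow>
      kpt n m i \<in> dom \<alpha> \<longrightarrow> \<alpha> (kpt n m i) = Some (kpt n (m + q) (\<sigma> i)))" if i: "i \<in> {1..n}" for i
  proof -
    have "\<exists>j. j \<in> {1..n} \<and> (\<exists>q::int. \<forall>m::int. m \<ge> 2 \<longrightarrow>
      kpt n m i \<in> dom \<alpha> \<longrightarrow> \<alpha> (kpt n m i) = Some (kpt n (m + q) j))" using ray[OF i] by blast
    from someI_ex[OF this] show ?thesis unfolding \<sigma>_def using i by simp
  qed
  have inj: "inj_on \<sigma> {1..n}"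
  proof (rule inj_onI, rule ccontr)
    fix a b assume a: "a \<in> {1..n}" and b: "b \<in> {1..n}" and e: "\<sigma> a = \<sigma> b" and ne: "a \<noteq> b"
    from sig[OF a] obtain qa where Ra: "\<forall>m::int. m \<ge> 2 \<longrightarrow>
      kpt n m a \<in> dom \<alpha> \<longrightarrow> \<alpha> (kpt n m a) = Some (kpt n (m + qa) (\<sigma> a))" by blast
    from sig[OF b] obtain qb where Rb: "\<forall>m::int. m \<ge> 2 \<longrightarrow>
      kpt n m b \<in> dom \<alpha> \<longrightarrow> \<alpha> (kpt n m b) = Some (kpt n (m + qb) (\<sigma> a))" using e by auto
    show False using ray_inj[OF a b ne Ra Rb] .
  qed
  have sub: "\<sigma> ` {1..n} \<subseteq> {1..n}" using sig by blast
  have "\<sigma> ` {1..n} = {1..n}" by (rule endo_inj_surj[OF _ sub inj]) simp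
  then have "bij_betw \<sigma> {1..n} {1..n}" using inj by (simp add: bij_betw_def)
  then have "\<sigma> permutes {1..n}" by (rule bij_imp_permutes) (auto simp: \<sigma>_def)
  show ?thesis
  proof (rule conjI[OF A], rule exI[where x=\<sigma>], rule conjI[OF \<open>\<sigma> permutes {1..n}\<close>], rule ballI)
    fix i assume "i \<in> {1..n}"
    from sig[OF this] show "\<exists>q::int. \<forall>m::int. m \<ge> 2 \<longrightarrow> kpt n m i \<in> dom \<alpha> \<longrightarrow>
                \<alpha> (kpt n m i) = Some (kpt n (m + q) (\<sigma> i))" by (rule conjunct2)
  qed
qed


end
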